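(* Let $X$ be a compact metric space, $T:X\to X$ continuous, $\mathcal U$ a partition of $X$ into finitely many closed-open sets, $N\in\mathbb N$, $s\in\mathbb R$ and $f:X\to\mathbb R$ continuous. (i) If $E_1\subseteq E_2\subseteq\cdots$ and $\bigcup_iE_i=E$, then $M_N^s(\mathcal U,f,E)=\lim_{i\to\infty}M_N^s(\mathcal U,f,E_i)$. (ii) If $Z\subseteq X$ is analytic, then $M_N^s(\mathcal U,f,Z)=\sup\{M_N^s(\mathcal U,f,K):K\subseteq Z,\ K\text{ compact}\}$.
   Context: $f_n=\sum_{i=0}^{n-1}f\circ T^i$. $\mathcal W_n(\mathcal U)$ is the set of strings $\mathbf U=U_1\cdots U_n$ with $U_i\in\mathcal U$; $m(\mathbf U)=n$ is its length, and $X(\mathbf U)=\{x\in X:T^{j-1}x\in U_j,\ j=1,\dots,n\}$. A family $\Lambda\subseteq\bigcup_n\mathcal W_n(\mathcal U)$ covers $Z$ if $\bigcup_{\mathbf U\in\Lambda}X(\mathbf U)\supseteq Z$. Define $M_N^s(\mathcal U,f,Z)=\inf_\Lambda\sum_{\mathbf U\in\Lambda}\exp\big(-sm(\mathbf U)+\sup_{y\in X(\mathbf U)}f_{m(\mathbf U)}(y)\big)$, infimum over all $\Lambda\subseteq\bigcup_{n\ge N}\mathcal W_n(\mathcal U)$ covering $Z$, with the convention $\sup_{y\in\emptyset}=-\infty$. A set is analytic if it is a continuous image of $\mathbb N^{\mathbb N}$ with the product topology. *)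

theory Defs
  imports "HOL-Analysis.Analysis"
begin

definition birk_sum :: "('a \<Rightarrow> 'a) \<Rightarrow> ('a \<Rightarrow> real) \<Rightarrow> nat \<Rightarrow> 'a \<Rightarrow> real" where
  "birk_sum T f n x = (\<Sum>i<n. f ((T ^^ i) x))"

definition words :: "'a set set \<Rightarrow> nat \<Rightarrow> 'a set list set" where
  "words U n = {w. set w \<subseteq> U \<and> length w = n}"

text \<open>X(U_1...U_n) = {x in X. T^(j-1) x in U_j, j=1..n}.\<close>
definition cyl :: "'a set \<Rightarrow> ('a \<Rightarrow> 'a) \<Rightarrow> 'a set list \<Rightarrow> 'a set" where
  "cyl X T w = {x \<in> X. \<forall>j<length w. (T ^^ j) x \<in> w ! j}"

text \<open>exp(-s m(U) + sup_{y in X(U)} f_{m(U)}(y)), with sup over empty = -infinity giving 0.\<close>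
definition word_weight :: "'a set \<Rightarrow> ('a \<Rightarrow> 'a) \<Rightarrow> ('a \<Rightarrow> real) \<Rightarrow> real \<Rightarrow> 'a set list \<Rightarrow> ennreal" where
  "word_weight X T f s w =
     (if cyl X T w = {} then 0
      else ennreal (exp (- s * real (length w) + (SUP y\<in>cyl X T w. birk_sum T f (length w) y))))"

definition MNs :: "'a set \<Rightarrow> ('a \<Rightarrow> 'a) \<Rightarrow> nat \<Rightarrow> real \<Rightarrow> 'a set set \<Rightarrow> ('a \<Rightarrow> real) \<Rightarrow> 'a set \<Rightarrow> ennreal" where
  "MNs X T N s U f Z =
     (INF \<Lambda> \<in> {\<Lambda>. \<Lambda> \<subseteq> (\<Union>n\<in>{N..}. words U n) \<and> Z \<subseteq> (\<Union>w\<in>\<Lambda>. cyl X T w)}.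
        (\<Sum>\<^sub>\<infinity> w\<in>\<Lambda>. word_weight X T f s w))"

definition analytic_set :: "'a::topological_space set \<Rightarrow> bool" where
  "analytic_set Z \<longleftrightarrow> (\<exists>g :: (nat \<Rightarrow> nat) \<Rightarrow> 'a.
      continuous_map (product_topology (\<lambda>_. discrete_topology (UNIV::nat set)) UNIV) euclidean g
      \<and> g ` UNIV = Z)"

end

theory Submission imports Defs begin

definition pfx :: "'b list \<Rightarrow> 'b list \<Rightarrow> bool" where
  "pfx u w \<longleftrightarrow> (\<exists>zs. w = u @ zs)"

lemma pfx_refl[simp]: "pfx u u" unfolding pfx_def by auto

lemma pfx_trans: "pfx u v \<Longrightarrow> pfx v w \<Longrightarrow> pfx u w" unfolding pfx_def by auto

lemma pfx_length: "pfx u w \<Longrightarrow> u \<noteq> w \<Longrightarrow> length u < length w"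
  unfolding pfx_def by auto

lemma pfx_nth: "pfx u w \<Longrightarrow> j < length u \<Longrightarrow> w ! j = u ! j"
  unfolding pfx_def by (auto simp: nth_append)

lemma not_pfx_decomp:
  assumes "\<not> pfx u w" "\<not> pfx w u"
  shows "\<exists>j. j < length u \<and> j < length w \<and> u ! j \<noteq> w ! j"
proof (rule ccontr)
  assume H: "\<not> ?thesis"
  show False
  proof (cases "length u \<le> length w")
    case True
    have "take (length u) w = u"
      using H True by (intro nth_equalityI) auto
    then have "pfx u w" unfolding pfx_def by (metis append_take_drop_id)
    then show False using assms by auto
  next
    case False
    have "take (length w) u = w"
      using H False by (intro nth_equalityI) auto
    then have "pfx w u" unfolding pfx_def by (metis append_take_drop_id)
    then show False using assms by auto
  qed
qed


definition cost :: "'a set \<Rightarrow> ('a \<Rightarrow> 'a) \<Rightarrow> ('a \<Rightarrow> real) \<Rightarrow> real \<Rightarrow> 'a set list set \<Rightarrow> ennreal" where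
  "cost X T f s L = (\<Sum>\<^sub>\<infinity> w\<in>L. word_weight X T f s w)"

definition WW :: "'a set set \<Rightarrow> nat \<Rightarrow> 'a set list set" where
  "WW U N = (\<Union>n\<in>{N..}. words U n)"

lemma ww_summable[simp]: "word_weight X T f s summable_on A"
  by (rule nonneg_summable_on_complete) simp

lemma cost_mono: "A \<subseteq> B \<Longrightarrow> cost X T f s A \<le> cost X T f s B"
  unfolding cost_def by (rule infsum_mono_neutral) auto

lemma cost_Un_disj: "A \<inter> B = {} \<Longrightarrow> cost X T f s (A \<union> B) = cost X T f s A + cost X T f s B"
  unfolding cost_def by (rule infsum_Un_disjoint) auto

lemma cost_Un_le: "cost X T f s (A \<union> B) \<le> cost X T f s A + cost X T f s B"
proof -
  have "A \<union> B = A \<union> (B - A)" by auto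
  then have "cost X T f s (A \<union> B) = cost X T f s A + cost X T f s (B - A)"
    using cost_Un_disj[of A "B - A"] by auto
  also have "\<dots> \<le> cost X T f s A + cost X T f s B"
    by (intro add_left_mono cost_mono) auto
  finally show ?thesis .
qed

lemma cost_empty[simp]: "cost X T f s {} = 0" unfolding cost_def by simp

lemma cost_le_finite:
  assumes "\<And>F. finite F \<Longrightarrow> F \<subseteq> L \<Longrightarrow> cost X T f s F \<le> b"
  shows "cost X T f s L \<le> b"
  unfolding cost_def
proof (rule infsum_le_finite_sums)
  fix F assume "finite F" "F \<subseteq> L"
  then show "sum (word_weight X T f s) F \<le> b" using assms[of F] by (simp add: cost_def)
qed simp

lemma MNs_alt: "MNs X T N s U f Z = (INF L\<in>{L. L \<subseteq> WW U N \<and> Z \<subseteq> (\<Union>w\<in>L. cyl X T w)}. cost X T f s L)"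
  unfolding MNs_def cost_def WW_def by simp

lemma MNs_le: "L \<subseteq> WW U N \<Longrightarrow> Z \<subseteq> (\<Union>w\<in>L. cyl X T w) \<Longrightarrow> MNs X T N s U f Z \<le> cost X T f s L"
  unfolding MNs_alt by (rule INF_lower) auto

lemma MNs_mono: "A \<subseteq> B \<Longrightarrow> MNs X T N s U f A \<le> MNs X T N s U f B"
  unfolding MNs_alt by (rule INF_superset_mono) auto

lemma MNs_lessE:
  assumes "MNs X T N s U f Z < c"
  obtains L where "L \<subseteq> WW U N" "Z \<subseteq> (\<Union>w\<in>L. cyl X T w)" "cost X T f s L < c"
  using assms unfolding MNs_alt INF_less_iff by auto

lemma cyl_pfx: "pfx u w \<Longrightarrow> cyl X T w \<subseteq> cyl X T u"
proof
  fix x assume p: "pfx u w" and x: "x \<in> cyl X T w"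
  have len: "length u \<le> length w" using p unfolding pfx_def by auto
  have "(T ^^ j) x \<in> u ! j" if "j < length u" for j
  proof -
    have "(T ^^ j) x \<in> w ! j" using x that len unfolding cyl_def by auto
    then show ?thesis using pfx_nth[OF p that] by simp
  qed
  then show "x \<in> cyl X T u" using x unfolding cyl_def by auto
qed

lemma cyl_meet:
  assumes "x \<in> cyl X T u" "x \<in> cyl X T w" "set u \<subseteq> U" "set w \<subseteq> U" "disjoint U"
  shows "pfx u w \<or> pfx w u"
proof (rule ccontr)
  assume "\<not> (pfx u w \<or> pfx w u)"
  then obtain j where j: "j < length u" "j < length w" "u ! j \<noteq> w ! j"
    using not_pfx_decomp by blast
  define b where "b = u ! j"
  define c where "c = w ! j"
  have bc: "b \<noteq> c" using j by (simp add: b_def c_def)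
  have xb: "(T ^^ j) x \<in> b" using assms(1) j unfolding cyl_def b_def by auto
  have xc: "(T ^^ j) x \<in> c" using assms(2) j unfolding cyl_def c_def by auto
  have bu: "b \<in> U" using assms(3) nth_mem[OF j(1)] unfolding b_def by (rule subsetD)
  have cu: "c \<in> U" using assms(4) nth_mem[OF j(2)] unfolding c_def by (rule subsetD)
  have "b \<inter> c = {}" by (rule disjointD[OF assms(5) bu cu bc])
  then show False using xb xc by auto
qed

definition MinP :: "'b list set \<Rightarrow> 'b list set" where
  "MinP A = {w\<in>A. \<forall>u\<in>A. pfx u w \<longrightarrow> u = w}"

lemma MinP_ex: "w \<in> A \<Longrightarrow> \<exists>u\<in>MinP A. pfx u w"
proof (induction "length w" arbitrary: w rule: less_induct)
  case less
  show ?case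
  proof (cases "w \<in> MinP A")
    case True then show ?thesis using pfx_refl[of w] by blast
  next
    case False
    then obtain u where u: "u \<in> A" "pfx u w" "u \<noteq> w" using less.prems by (auto simp: MinP_def)
    then have "length u < length w" using pfx_length by blast
    from less.hyps[OF this u(1)] obtain v where "v \<in> MinP A" "pfx v u" by blast
    then show ?thesis using u(2) by (meson pfx_trans)
  qed
qed

lemma MinP_sub: "MinP A \<subseteq> A" by (auto simp: MinP_def)

lemma MinP_cover: "(\<Union>w\<in>A. cyl X T w) \<subseteq> (\<Union>w\<in>MinP A. cyl X T w)"
proof
  fix x assume "x \<in> (\<Union>w\<in>A. cyl X T w)"
  then obtain w where w: "w \<in> A" "x \<in> cyl X T w" by blast
  obtain u where "u \<in> MinP A" "pfx u w" using MinP_ex[OF w(1)] by blast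
  then show "x \<in> (\<Union>w\<in>MinP A. cyl X T w)" using cyl_pfx[of u w X T] w(2) by blast
qed

lemma MinP_anti: "A \<subseteq> B \<Longrightarrow> w \<in> MinP B \<Longrightarrow> w \<in> A \<Longrightarrow> w \<in> MinP A"
  by (auto simp: MinP_def)

lemma WW_set: "w \<in> WW U N \<Longrightarrow> set w \<subseteq> U"
  by (auto simp: WW_def words_def)



lemma geom_sum: "(\<Sum>j<n. e / 2 ^ Suc j) = (e::real) * (1 - 1 / 2 ^ n)"
  by (induction n) (simp_all add: field_simps)

lemma geom_bound: "0 \<le> e \<Longrightarrow> (\<Sum>j<n. e / 2 ^ Suc j) \<le> (e::real)"
  unfolding geom_sum by (simp add: mult_left_le)

context
  fixes X :: "'a set" and T :: "'a \<Rightarrow> 'a" and N :: nat and s :: real and U :: "'a set set" and f :: "'a \<Rightarrow> real"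
begin

abbreviation "cst \<equiv> cost X T f s"
abbreviation "MM \<equiv> MNs X T N s U f"
abbreviation "cy \<equiv> cyl X T"

lemma part1_le:
  fixes E :: "nat \<Rightarrow> 'a set" and a :: ennreal
  assumes dU: "disjoint U" and inc: "incseq E" and bnd: "\<And>i. MM (E i) \<le> a" and fin: "a < \<infinity>"
  shows "MM (\<Union>i. E i) \<le> a"
proof (rule ennreal_le_epsilon)
  fix e :: real assume "a < top" and epos: "0 < e"
  define \<delta> where "\<delta> j = ennreal (e / 2 ^ Suc j)" for j
  define S where "S k = ennreal (\<Sum>j<k. e / 2 ^ Suc j)" for k
  have \<delta>pos: "0 < \<delta> j" for j using epos by (simp add: \<delta>_def)
  have Sle: "S k \<le> ennreal e" for k unfolding S_def using geom_bound[of e k] epos by (intro ennreal_leI) simp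
  have SSuc: "S (Suc k) = S k + \<delta> k" for k
    unfolding S_def \<delta>_def using epos by (simp add: ennreal_plus[symmetric] sum_nonneg del: ennreal_plus)
  have Efin: "MM (E k) < \<infinity>" for k using bnd[of k] fin by (rule le_less_trans)
  have "\<exists>L. L \<subseteq> WW U N \<and> E k \<subseteq> (\<Union>w\<in>L. cy w) \<and> cst L < MM (E k) + \<delta> k" for k
  proof -
    have "MM (E k) + 0 < MM (E k) + \<delta> k"
      using ennreal_add_left_cancel_less[of "MM (E k)" 0 "\<delta> k"] Efin[of k] \<delta>pos[of k] by simp
    then have "MM (E k) < MM (E k) + \<delta> k" by simp
    then show ?thesis by (rule MNs_lessE) blast
  qed
  then obtain C where C_W: "\<And>k. C k \<subseteq> WW U N"
    and C_cov: "\<And>k. E k \<subseteq> (\<Union>w\<in>C k. cy w)"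
    and C_cost: "\<And>k. cst (C k) < MM (E k) + \<delta> k" by metis
  define A where "A k = (\<Union>j<k. C j)" for k
  have A_Suc: "A (Suc k) = A k \<union> C k" for k unfolding A_def lessThan_Suc by auto
  have A_W: "A k \<subseteq> WW U N" for k unfolding A_def using C_W by blast
  have P: "\<forall>G D. G \<subseteq> MinP (A k) \<longrightarrow> D \<subseteq> WW U N \<longrightarrow> E k \<inter> (\<Union>w\<in>G. cy w) \<subseteq> (\<Union>w\<in>D. cy w)
            \<longrightarrow> cst G \<le> cst D + S k" for k
  proof (induction k)
    case 0
    have "MinP (A 0) = {}" unfolding A_def MinP_def by simp
    then show ?case by simp
  next
    case (Suc k)
    show ?case
    proof (intro allI impI)
      fix G D
      assume G: "G \<subseteq> MinP (A (Suc k))" and D: "D \<subseteq> WW U N"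
        and GD: "E (Suc k) \<inter> (\<Union>w\<in>G. cy w) \<subseteq> (\<Union>w\<in>D. cy w)"
      define Gn where "Gn = G \<inter> C k"
      define Go where "Go = G - C k"
      define Ro where "Ro = {c \<in> C k. \<exists>g\<in>Go. pfx g c}"
      define Q where "Q = Gn \<union> Ro"
      have GM: "g \<in> A (Suc k)" "\<And>u. u \<in> A (Suc k) \<Longrightarrow> pfx u g \<Longrightarrow> u = g" if "g \<in> G" for g
        using G that unfolding MinP_def by auto
      have GW: "set g \<subseteq> U" if "g \<in> G" for g using GM(1)[OF that] A_W WW_set by blast
      have CW: "set c \<subseteq> U" if "c \<in> C k" for c using C_W WW_set that by blast
      have Go_sub: "Go \<subseteq> MinP (A k)"
      proof
        fix g assume g: "g \<in> Go"
        then have "g \<in> G" "g \<notin> C k" unfolding Go_def by auto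
        then have "g \<in> A k" using GM(1) A_Suc by auto
        moreover have "g \<in> MinP (A (Suc k))" using G \<open>g \<in> G\<close> by auto
        ultimately show "g \<in> MinP (A k)" using MinP_anti[of "A k" "A (Suc k)"] A_Suc by auto
      qed
      have Ro_sub: "Ro \<subseteq> WW U N" unfolding Ro_def using C_W by blast
      have disj: "Gn \<inter> Ro = {}"
      proof (rule ccontr)
        assume "Gn \<inter> Ro \<noteq> {}"
        then obtain c g where c: "c \<in> G" "c \<in> C k" "g \<in> Go" "pfx g c"
          unfolding Gn_def Ro_def by blast
        have "g \<in> A (Suc k)" using c(3) GM(1) unfolding Go_def by auto
        then have "g = c" using GM(2)[OF c(1)] c(4) by blast
        then show False using c unfolding Go_def by auto
      qed
      have cov1: "E k \<inter> (\<Union>w\<in>Go. cy w) \<subseteq> (\<Union>w\<in>Ro. cy w)"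
      proof
        fix x assume "x \<in> E k \<inter> (\<Union>w\<in>Go. cy w)"
        then obtain g where x: "x \<in> E k" "g \<in> Go" "x \<in> cy g" by blast
        obtain c where c: "c \<in> C k" "x \<in> cy c" using C_cov x(1) by blast
        have g: "g \<in> G" using x(2) unfolding Go_def by auto
        have "pfx g c \<or> pfx c g" using cyl_meet[OF x(3) c(2) GW[OF g] CW[OF c(1)] dU] .
        moreover have "pfx c g \<Longrightarrow> c = g" using GM(2)[OF g, of c] c(1) A_Suc by auto
        ultimately have "pfx g c" by auto
        then have "c \<in> Ro" unfolding Ro_def using c(1) x(2) by auto
        then show "x \<in> (\<Union>w\<in>Ro. cy w)" using c(2) by auto
      qed
      have IH: "cst Go \<le> cst Ro + S k" using Suc.IH Go_sub Ro_sub cov1 by blast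
      have cov2: "E k \<subseteq> (\<Union>w\<in>(C k - Q) \<union> D. cy w)"
      proof
        fix x assume xE: "x \<in> E k"
        obtain c where c: "c \<in> C k" "x \<in> cy c" using C_cov xE by blast
        show "x \<in> (\<Union>w\<in>(C k - Q) \<union> D. cy w)"
        proof (cases "c \<in> Q")
          case False then show ?thesis using c by auto
        next
          case True
          have "x \<in> (\<Union>w\<in>G. cy w)"
          proof (cases "c \<in> Gn")
            case True then show ?thesis using c unfolding Gn_def by auto
          next
            case False
            then have "c \<in> Ro" using \<open>c \<in> Q\<close> unfolding Q_def by auto
            then obtain g where "g \<in> Go" "pfx g c" unfolding Ro_def by auto
            then have "x \<in> cy g" "g \<in> G" using cyl_pfx[of g c X T] c(2) unfolding Go_def by auto
            then show ?thesis by auto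
          qed
          moreover have "x \<in> E (Suc k)" using xE inc by (auto simp: incseq_Suc_iff)
          ultimately show ?thesis using GD by auto
        qed
      qed
      have "MM (E k) \<le> cst ((C k - Q) \<union> D)"
        by (rule MNs_le) (use C_W D cov2 in auto)
      also have "\<dots> \<le> cst (C k - Q) + cst D" by (rule cost_Un_le)
      finally have M1: "MM (E k) \<le> cst (C k - Q) + cst D" .
      have QC: "Q \<subseteq> C k" unfolding Q_def Gn_def Ro_def by auto
      have eqC: "(C k - Q) \<union> Q = C k" using QC by auto
      have "cst (C k) = cst (C k - Q) + cst Q"
      proof -
        have dj: "(C k - Q) \<inter> Q = {}" by blast
        show ?thesis using cost_Un_disj[OF dj, of X T f s] eqC by simp
      qed
      also have "cst Q = cst Gn + cst Ro" unfolding Q_def by (rule cost_Un_disj[OF disj])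
      finally have Csplit: "cst (C k) = cst (C k - Q) + (cst Gn + cst Ro)" .
      have "cst (C k - Q) + (cst Gn + cst Ro) \<le> cst (C k - Q) + (cst D + \<delta> k)"
      proof -
        have "cst (C k - Q) + (cst Gn + cst Ro) \<le> MM (E k) + \<delta> k"
          using C_cost[of k] Csplit by simp
        also have "\<dots> \<le> cst (C k - Q) + cst D + \<delta> k" using M1 by (rule add_right_mono)
        finally show ?thesis by (simp add: add.assoc)
      qed
      moreover have "cst (C k - Q) \<noteq> \<infinity>"
      proof -
        have "cst (C k - Q) \<le> cst (C k)" by (rule cost_mono) auto
        also have "\<dots> < MM (E k) + \<delta> k" by (rule C_cost)
        also have "\<dots> \<le> \<infinity>" by simp
        finally show ?thesis by simp
      qed
      ultimately have B: "cst Gn + cst Ro \<le> cst D + \<delta> k"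
        using ennreal_add_left_cancel_le by blast
      have eqG: "Go \<union> Gn = G" unfolding Go_def Gn_def by auto
      have djG: "Go \<inter> Gn = {}" unfolding Go_def Gn_def by auto
      have "cst G = cst Go + cst Gn" using cost_Un_disj[OF djG, of X T f s] eqG by simp
      also have "\<dots> \<le> cst Ro + S k + cst Gn" using IH by (rule add_right_mono)
      also have "\<dots> = (cst Gn + cst Ro) + S k" by (simp add: ac_simps)
      also have "\<dots> \<le> cst D + \<delta> k + S k" using B by (rule add_right_mono)
      also have "\<dots> = cst D + S (Suc k)" by (simp add: SSuc ac_simps)
      finally show "cst G \<le> cst D + S (Suc k)" .
    qed
  qed
  define Mall where "Mall = MinP (\<Union>j. C j)"
  have Mall_W: "Mall \<subseteq> WW U N" unfolding Mall_def using MinP_sub C_W by blast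
  have cov: "(\<Union>i. E i) \<subseteq> (\<Union>w\<in>Mall. cy w)"
  proof
    fix x assume "x \<in> (\<Union>i. E i)"
    then obtain i where "x \<in> E i" by auto
    then obtain c where "c \<in> C i" "x \<in> cy c" using C_cov by blast
    then have "x \<in> (\<Union>w\<in>(\<Union>j. C j). cy w)" by auto
    then show "x \<in> (\<Union>w\<in>Mall. cy w)" unfolding Mall_def by (rule subsetD[OF MinP_cover])
  qed
  have "MM (\<Union>i. E i) \<le> cst Mall" by (rule MNs_le[OF Mall_W cov])
  also have "cst Mall \<le> a + ennreal e"
  proof (rule cost_le_finite)
    fix F assume F: "finite F" "F \<subseteq> Mall"
    have "\<forall>w\<in>F. \<exists>j. w \<in> C j"
    proof
      fix w assume "w \<in> F"
      then have "w \<in> (\<Union>j. C j)" using F(2) MinP_sub[of "\<Union>j. C j"] unfolding Mall_def by (meson subsetD)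
      then show "\<exists>j. w \<in> C j" by simp
    qed
    then obtain jf where jf: "\<And>w. w \<in> F \<Longrightarrow> w \<in> C (jf w)" by metis
    obtain k where k: "jf ` F \<subseteq> {..<k}" using finite_nat_bounded[of "jf ` F"] F(1) by auto
    have FA: "F \<subseteq> A k" unfolding A_def using jf k by blast
    have FM: "F \<subseteq> MinP (A k)"
    proof
      fix w assume "w \<in> F"
      moreover have "A k \<subseteq> (\<Union>j. C j)" unfolding A_def by auto
      ultimately show "w \<in> MinP (A k)" using MinP_anti[of "A k" "\<Union>j. C j" w] FA F(2)
        unfolding Mall_def by (meson subsetD)
    qed
    have "E k \<inter> (\<Union>w\<in>F. cy w) \<subseteq> (\<Union>w\<in>C k. cy w)" using C_cov[of k] by (meson Int_lower1 order_trans)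
    then have "cst F \<le> cst (C k) + S k" using P[of k, rule_format, OF FM C_W] by simp
    also have "\<dots> \<le> MM (E k) + \<delta> k + S k" using C_cost[of k] by (intro add_right_mono) simp
    also have "\<dots> \<le> a + (\<delta> k + S k)" using bnd[of k] by (simp add: add.assoc add_right_mono)
    also have "\<delta> k + S k = S (Suc k)" by (simp add: SSuc ac_simps)
    also have "a + S (Suc k) \<le> a + ennreal e" using Sle by (rule add_left_mono)
    finally show "cst F \<le> a + ennreal e" .
  qed
  finally show "MM (\<Union>i. E i) \<le> a + ennreal e" .
qed

end


lemma cyl_openin:
  assumes cT: "continuous_on X T" and TX: "T ` X \<subseteq> X"
    and Uo: "\<forall>A\<in>U. openin (top_of_set X) A" and wU: "set w \<subseteq> U"
  shows "openin (top_of_set X) (cyl X T w)"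
proof -
  have cmT: "continuous_map (top_of_set X) (top_of_set X) T"
    using cT TX by auto
  have cm: "continuous_map (top_of_set X) (top_of_set X) (T ^^ j)" for j
  proof (induction j)
    case 0 then show ?case by simp
  next
    case (Suc j)
    have "continuous_map (top_of_set X) (top_of_set X) (T \<circ> (T ^^ j))"
      by (rule continuous_map_compose[OF Suc.IH cmT])
    then show ?case unfolding funpow.simps(2) .
  qed
  have each: "openin (top_of_set X) {x \<in> X. (T ^^ j) x \<in> w ! j}" if "j < length w" for j
  proof -
    have "w ! j \<in> U" using wU nth_mem[OF that] by (rule subsetD)
    then have "openin (top_of_set X) (w ! j)" using Uo by auto
    from openin_continuous_map_preimage[OF cm this] show ?thesis by simp
  qed
  have eq: "cyl X T w = (\<Inter>j\<in>{..<length w}. {x \<in> X. (T ^^ j) x \<in> w ! j}) \<inter> topspace (top_of_set X)"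
    by (auto simp: cyl_def)
  show ?thesis unfolding eq by (rule openin_INT) (use each in auto)
qed

lemma tube:
  fixes n :: "nat \<Rightarrow> nat" and W :: "(nat \<Rightarrow> nat) set"
  assumes W: "openin (product_topology (\<lambda>_. discrete_topology (UNIV::nat set)) UNIV) W"
    and SW: "{\<sigma>. \<forall>j. \<sigma> j \<le> n j} \<subseteq> W"
  shows "\<exists>m. {\<sigma>::nat\<Rightarrow>nat. \<forall>j<m. \<sigma> j \<le> n j} \<subseteq> W"
proof -
  define PT where "PT = product_topology (\<lambda>_. discrete_topology (UNIV::nat set)) (UNIV::nat set)"
  define S where "S = PiE UNIV (\<lambda>j. {..n j})"
  have S_eq: "S = {\<sigma>. \<forall>j. \<sigma> j \<le> n j}" by (auto simp: S_def PiE_iff)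
  have cS: "compactin PT S" unfolding PT_def S_def
    by (subst compactin_PiE) (simp add: compactin_discrete_topology)
  define dep where "dep m (P::(nat\<Rightarrow>nat) set) \<longleftrightarrow> (\<forall>\<tau> \<tau>'::nat\<Rightarrow>nat. (\<forall>j<m. \<tau> j = \<tau>' j) \<longrightarrow> \<tau>' \<in> P \<longrightarrow> \<tau> \<in> P)" for m P
  define CC where "CC = {P. openin PT P \<and> P \<subseteq> W \<and> (\<exists>m. dep m P)}"
  have SC: "S \<subseteq> \<Union>CC"
  proof
    fix \<sigma> assume "\<sigma> \<in> S"
    then have "\<sigma> \<in> W" using SW S_eq by auto
    then obtain V where V: "finite {i \<in> UNIV. V i \<noteq> topspace (discrete_topology (UNIV::nat set))}"
      "\<forall>i\<in>UNIV. openin (discrete_topology UNIV) (V i)" "\<sigma> \<in> PiE UNIV V" "PiE UNIV V \<subseteq> W"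
      using W unfolding openin_product_topology_alt by blast
    have fin: "finite {i. V i \<noteq> UNIV}" using V(1) by simp
    obtain m where m: "{i. V i \<noteq> UNIV} \<subseteq> {..<m}" using finite_nat_bounded[OF fin] by blast
    have op: "openin PT (PiE UNIV V)" unfolding PT_def using V(1,2) by (subst openin_PiE_gen) auto
    have "dep m (PiE UNIV V)" unfolding dep_def
    proof (intro allI impI)
      fix \<tau> \<tau>' :: "nat \<Rightarrow> nat" assume ag: "\<forall>j<m. \<tau> j = \<tau>' j" and t': "\<tau>' \<in> PiE UNIV V"
      have "\<tau> i \<in> V i" for i
      proof (cases "V i = UNIV")
        case True then show ?thesis by simp
      next
        case False
        then have "i < m" using m by auto
        then show ?thesis using ag t' by (auto simp: PiE_iff)
      qed
      then show "\<tau> \<in> PiE UNIV V" by (simp add: PiE_iff)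
    qed
    then have "PiE UNIV V \<in> CC" unfolding CC_def using op V(4) by auto
    then show "\<sigma> \<in> \<Union>CC" using V(3) by auto
  qed
  obtain FF where FF: "finite FF" "FF \<subseteq> CC" "S \<subseteq> \<Union>FF"
    using compactinD[OF cS _ SC] unfolding CC_def by blast
  have "\<forall>P\<in>FF. \<exists>m. dep m P" using FF(2) unfolding CC_def by auto
  then obtain mf where mf: "\<And>P. P \<in> FF \<Longrightarrow> dep (mf P) P" by metis
  obtain m where m: "mf ` FF \<subseteq> {..<m}" using finite_nat_bounded[of "mf ` FF"] FF(1) by auto
  have "{\<sigma>::nat\<Rightarrow>nat. \<forall>j<m. \<sigma> j \<le> n j} \<subseteq> W"
  proof
    fix \<tau> :: "nat \<Rightarrow> nat" assume t: "\<tau> \<in> {\<sigma>. \<forall>j<m. \<sigma> j \<le> n j}"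
    define \<tau>' where "\<tau>' j = (if j < m then \<tau> j else 0)" for j
    have "\<tau>' \<in> S" unfolding S_eq \<tau>'_def using t by auto
    then obtain P where P: "P \<in> FF" "\<tau>' \<in> P" using FF(3) by auto
    have "mf P < m" using m P(1) by auto
    then have "\<forall>j<mf P. \<tau> j = \<tau>' j" unfolding \<tau>'_def by auto
    then have "\<tau> \<in> P" using mf[OF P(1)] P(2) unfolding dep_def by blast
    then show "\<tau> \<in> W" using P(1) FF(2) unfolding CC_def by auto
  qed
  then show ?thesis by blast
qed

lemma compact_image_S:
  fixes g :: "(nat \<Rightarrow> nat) \<Rightarrow> 'a::topological_space"
  assumes "continuous_map (product_topology (\<lambda>_. discrete_topology (UNIV::nat set)) UNIV) euclidean g"
  shows "compact (g ` {\<sigma>. \<forall>j. \<sigma> j \<le> n j})"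
proof -
  have S_eq: "{\<sigma>. \<forall>j. \<sigma> j \<le> n j} = PiE UNIV (\<lambda>j. {..n j})" by (auto simp: PiE_iff)
  have "compactin (product_topology (\<lambda>_. discrete_topology (UNIV::nat set)) UNIV) (PiE UNIV (\<lambda>j. {..n j}))"
    by (subst compactin_PiE) (simp add: compactin_discrete_topology)
  from image_compactin[OF this assms] show ?thesis unfolding S_eq by simp
qed


lemma part1_lim:
  fixes E :: "nat \<Rightarrow> 'a set"
  assumes dU: "disjoint U" and inc: "incseq E"
  shows "(\<lambda>i. MNs X T N s U f (E i)) \<longlonglongrightarrow> MNs X T N s U f (\<Union>i. E i)"
proof -
  have incM: "incseq (\<lambda>i. MNs X T N s U f (E i))"
  proof (rule incseq_SucI)
    fix i show "MNs X T N s U f (E i) \<le> MNs X T N s U f (E (Suc i))"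
      by (rule MNs_mono) (use inc in \<open>simp add: incseq_Suc_iff\<close>)
  qed
  have eq: "(SUP i. MNs X T N s U f (E i)) = MNs X T N s U f (\<Union>i. E i)"
  proof (rule antisym)
    show "(SUP i. MNs X T N s U f (E i)) \<le> MNs X T N s U f (\<Union>i. E i)"
    proof (rule SUP_least)
      fix i show "MNs X T N s U f (E i) \<le> MNs X T N s U f (\<Union>i. E i)"
        by (rule MNs_mono) (rule Union_upper, simp)
    qed
    show "MNs X T N s U f (\<Union>i. E i) \<le> (SUP i. MNs X T N s U f (E i))"
    proof (cases "(SUP i. MNs X T N s U f (E i)) = \<infinity>")
      case True
      have "MNs X T N s U f (\<Union>i. E i) \<le> \<infinity>" by simp
      then show ?thesis by (simp only: True)
    next
      case False
      then have fin: "(SUP i. MNs X T N s U f (E i)) < \<infinity>" unfolding infinity_ennreal_def by (simp only: less_top[symmetric] not_False_eq_True)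
      show ?thesis by (rule part1_le[OF dU inc _ fin]) (rule SUP_upper, simp)
    qed
  qed
  show ?thesis using LIMSEQ_SUP[OF incM] unfolding eq .
qed

lemma part2:
  fixes g :: "(nat \<Rightarrow> nat) \<Rightarrow> 'a::topological_space" and Z :: "'a set"
  assumes dU: "disjoint U" and ZX: "Z \<subseteq> X"
    and gc: "continuous_map (product_topology (\<lambda>_. discrete_topology (UNIV::nat set)) UNIV) euclidean g"
    and gZ: "g ` UNIV = Z"
    and cylo: "\<And>w. w \<in> WW U N \<Longrightarrow> openin (top_of_set X) (cyl X T w)"
  shows "MNs X T N s U f Z \<le> (SUP K \<in> {K. K \<subseteq> Z \<and> compact K}. MNs X T N s U f K)"
proof (rule dense_le)
  fix c assume c: "c < MNs X T N s U f Z"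
  define \<Gamma> where "\<Gamma> h k = g ` {\<sigma>. \<forall>j<k. \<sigma> j \<le> h j}" for h :: "nat \<Rightarrow> nat" and k
  have step: "\<exists>m. c < MNs X T N s U f (\<Gamma> (h(k := m)) (Suc k))"
    if ch: "c < MNs X T N s U f (\<Gamma> h k)" for h k
  proof -
    define E where "E m = \<Gamma> (h(k := m)) (Suc k)" for m
    have Eeq: "E m = g ` {\<sigma>. (\<forall>j<k. \<sigma> j \<le> h j) \<and> \<sigma> k \<le> m}" for m
    proof -
      have "{\<sigma>. \<forall>j<Suc k. \<sigma> j \<le> (h(k := m)) j} = {\<sigma>. (\<forall>j<k. \<sigma> j \<le> h j) \<and> \<sigma> k \<le> m}"
        by (auto simp: less_Suc_eq)
      then show ?thesis unfolding E_def \<Gamma>_def by simp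
    qed
    have inc: "incseq E" unfolding incseq_def Eeq by (auto intro!: image_mono)
    have U1: "(\<Union>m. {\<sigma>. (\<forall>j<k. \<sigma> j \<le> h j) \<and> \<sigma> k \<le> m}) = {\<sigma>. \<forall>j<k. \<sigma> j \<le> h j}" by auto
    have "(\<Union>m. E m) = g ` (\<Union>m. {\<sigma>. (\<forall>j<k. \<sigma> j \<le> h j) \<and> \<sigma> k \<le> m})"
      unfolding Eeq by (rule image_UN[symmetric])
    then have UE: "(\<Union>m. E m) = \<Gamma> h k" unfolding U1 \<Gamma>_def .
    have "(\<lambda>m. MNs X T N s U f (E m)) \<longlonglongrightarrow> MNs X T N s U f (\<Gamma> h k)"
      using part1_lim[OF dU inc] unfolding UE .
    from order_tendstoD(1)[OF this ch] obtain m where "c < MNs X T N s U f (E m)"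
      by (auto simp: eventually_sequentially)
    then show ?thesis unfolding E_def by blast
  qed
  have "\<exists>F. \<forall>k. c < MNs X T N s U f (\<Gamma> (F k) k) \<and> (\<forall>j<k. F (Suc k) j = F k j)"
  proof (rule dependent_nat_choice)
    have "\<Gamma> (\<lambda>_. 0) 0 = Z" unfolding \<Gamma>_def using gZ by simp
    then show "\<exists>x. c < MNs X T N s U f (\<Gamma> x 0)" using c by metis
  next
    fix h k assume "c < MNs X T N s U f (\<Gamma> h k)"
    from step[OF this] obtain m where "c < MNs X T N s U f (\<Gamma> (h(k := m)) (Suc k))" by blast
    moreover have "\<forall>j<k. (h(k := m)) j = h j" by auto
    ultimately show "\<exists>y. c < MNs X T N s U f (\<Gamma> y (Suc k)) \<and> (\<forall>j<k. y j = h j)" by blast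
  qed
  then obtain F where F: "\<And>k. c < MNs X T N s U f (\<Gamma> (F k) k)" "\<And>k j. j < k \<Longrightarrow> F (Suc k) j = F k j"
    by blast
  define n where "n j = F (Suc j) j" for j
  have stab: "j < k \<Longrightarrow> F k j = n j" for j k
  proof (induction k)
    case 0 then show ?case by simp
  next
    case (Suc k)
    show ?case
    proof (cases "j = k")
      case True then show ?thesis unfolding n_def by simp
    next
      case False
      then have "j < k" using Suc.prems by simp
      then show ?thesis using F(2)[of j k] Suc.IH by simp
    qed
  qed
  have Gn: "c < MNs X T N s U f (\<Gamma> n k)" for k
  proof -
    have "{\<sigma>. \<forall>j<k. \<sigma> j \<le> F k j} = {\<sigma>. \<forall>j<k. \<sigma> j \<le> n j}" using stab by auto
    then have "\<Gamma> (F k) k = \<Gamma> n k" unfolding \<Gamma>_def by simp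
    then show ?thesis using F(1)[of k] by simp
  qed
  define K where "K = g ` {\<sigma>. \<forall>j. \<sigma> j \<le> n j}"
  have cK: "compact K" unfolding K_def by (rule compact_image_S[OF gc])
  have KZ: "K \<subseteq> Z" unfolding K_def using gZ by auto
  have "c \<le> MNs X T N s U f K"
  proof (rule ccontr)
    assume "\<not> c \<le> MNs X T N s U f K"
    then have "MNs X T N s U f K < c" by simp
    then obtain L where L: "L \<subseteq> WW U N" "K \<subseteq> (\<Union>w\<in>L. cyl X T w)" "cost X T f s L < c"
      by (rule MNs_lessE)
    have "\<forall>w\<in>L. \<exists>Q. open Q \<and> cyl X T w = X \<inter> Q"
    proof
      fix w assume "w \<in> L"
      then have "w \<in> WW U N" using L(1) by (rule subsetD[rotated])
      then have "openin (top_of_set X) (cyl X T w)" by (rule cylo)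
      then show "\<exists>Q. open Q \<and> cyl X T w = X \<inter> Q" by (simp only: openin_open)
    qed
    then obtain Op where Op: "\<And>w. w \<in> L \<Longrightarrow> open (Op w)" "\<And>w. w \<in> L \<Longrightarrow> cyl X T w = X \<inter> Op w" by metis
    have KL: "K \<subseteq> (\<Union>w\<in>L. Op w)" using L(2) Op(2) by auto
    obtain L' where L': "L' \<subseteq> L" "finite L'" "K \<subseteq> (\<Union>w\<in>L'. Op w)"
      by (rule compactE_image[OF cK Op(1) KL])
    define OOp where "OOp = (\<Union>w\<in>L'. Op w)"
    have "open OOp" unfolding OOp_def using Op(1) L'(1) by auto
    then have "openin euclidean OOp" by simp
    from openin_continuous_map_preimage[OF gc this]
    have Wo: "openin (product_topology (\<lambda>_. discrete_topology (UNIV::nat set)) UNIV) {\<sigma>. g \<sigma> \<in> OOp}"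
      by simp
    have "{\<sigma>. \<forall>j. \<sigma> j \<le> n j} \<subseteq> {\<sigma>. g \<sigma> \<in> OOp}" using L'(3) unfolding OOp_def K_def by auto
    from tube[OF Wo this] obtain m where m: "{\<sigma>::nat\<Rightarrow>nat. \<forall>j<m. \<sigma> j \<le> n j} \<subseteq> {\<sigma>. g \<sigma> \<in> OOp}" by blast
    have "\<Gamma> n m \<subseteq> Z" unfolding \<Gamma>_def using gZ by auto
    have "\<Gamma> n m \<subseteq> (\<Union>w\<in>L'. cyl X T w)"
    proof
      fix x assume x: "x \<in> \<Gamma> n m"
      then have "x \<in> OOp" using m unfolding \<Gamma>_def by auto
      then obtain w where w: "w \<in> L'" "x \<in> Op w" unfolding OOp_def by auto
      have "x \<in> X" using x \<open>\<Gamma> n m \<subseteq> Z\<close> ZX by auto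
      then have "x \<in> cyl X T w" using Op(2)[of w] w L'(1) by auto
      then show "x \<in> (\<Union>w\<in>L'. cyl X T w)" using w(1) by auto
    qed
    then have "MNs X T N s U f (\<Gamma> n m) \<le> cost X T f s L'" using L(1) L'(1) by (intro MNs_le) auto
    also have "\<dots> \<le> cost X T f s L" using L'(1) by (rule cost_mono)
    also have "\<dots> < c" by (rule L(3))
    finally show False using Gn[of m] by simp
  qed
  also have "\<dots> \<le> (SUP K \<in> {K. K \<subseteq> Z \<and> compact K}. MNs X T N s U f K)"
    by (rule SUP_upper) (use cK KZ in auto)
  finally show "c \<le> (SUP K \<in> {K. K \<subseteq> Z \<and> compact K}. MNs X T N s U f K)" .
qed

theorem lemma3p4:
  fixes X :: "'a::metric_space set" and T :: "'a \<Rightarrow> 'a" and U :: "'a set set"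
    and N :: nat and s :: real and f :: "'a \<Rightarrow> real"
  assumes "compact X"
    and "continuous_on X T" and "T ` X \<subseteq> X"
    and "finite U" and "\<Union>U = X" and "disjoint U"
    and "\<forall>A\<in>U. openin (top_of_set X) A \<and> closedin (top_of_set X) A"
    and "continuous_on X f"
  shows "(\<forall>E :: nat \<Rightarrow> 'a set. (\<forall>i. E i \<subseteq> X) \<longrightarrow> incseq E \<longrightarrow>
            (\<lambda>i. MNs X T N s U f (E i)) \<longlonglongrightarrow> MNs X T N s U f (\<Union>i. E i))
       \<and> (\<forall>Z. Z \<subseteq> X \<longrightarrow> analytic_set Z \<longrightarrow>
            MNs X T N s U f Z = (SUP K \<in> {K. K \<subseteq> Z \<and> compact K}. MNs X T N s U f K))"
proof (intro conjI allI impI)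
  fix E :: "nat \<Rightarrow> 'a set" assume "incseq E"
  then show "(\<lambda>i. MNs X T N s U f (E i)) \<longlonglongrightarrow> MNs X T N s U f (\<Union>i. E i)"
    by (rule part1_lim[OF assms(6)])
next
  fix Z :: "'a set" assume ZX: "Z \<subseteq> X" and an: "analytic_set Z"
  then obtain g :: "(nat \<Rightarrow> nat) \<Rightarrow> 'a" where
    gc: "continuous_map (product_topology (\<lambda>_. discrete_topology (UNIV::nat set)) UNIV) euclidean g"
    and gZ: "g ` UNIV = Z" unfolding analytic_set_def by blast
  have Uo: "\<forall>A\<in>U. openin (top_of_set X) A" using assms(7) by blast
  have cylo: "openin (top_of_set X) (cyl X T w)" if "w \<in> WW U N" for w
    by (rule cyl_openin[OF assms(2) assms(3) Uo WW_set[OF that]])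
  show "MNs X T N s U f Z = (SUP K \<in> {K. K \<subseteq> Z \<and> compact K}. MNs X T N s U f K)"
  proof (rule antisym)
    show "MNs X T N s U f Z \<le> (SUP K \<in> {K. K \<subseteq> Z \<and> compact K}. MNs X T N s U f K)"
      by (rule part2[OF assms(6) ZX gc gZ cylo])
    show "(SUP K \<in> {K. K \<subseteq> Z \<and> compact K}. MNs X T N s U f K) \<le> MNs X T N s U f Z"
      by (rule SUP_least) (auto intro: MNs_mono)
  qed
qed

end
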